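(* Let $\mathcal{C}\subsetneq\mathbb{F}_2^n$ be a linear code that is $(\Delta,s)$-locally testable with respect to a $\Delta$-limited parity-check matrix $H$ of size $m\times n$ with $n/2\le m\le n$, and let $\mathbf{0}_t\subseteq\mathbb{F}_2^t$ be the zero code of length $t$. Then the code $\mathcal{C}':=\mathcal{C}\oplus\mathbf{0}_t\subseteq\mathbb{F}_2^{n+t}$ is $(\Delta,s')$-locally testable with respect to a $\Delta$-limited parity-check matrix, where $s':=\min(s/2,1)$.
   Context: A linear code $\mathcal{C}\subseteq\mathbb{F}_q^n$ is $(\Delta,s)$-locally testable with respect to a parity-check matrix $H\in\mathbb{F}_q^{m\times n}$ ($\ker H=\mathcal{C}$) if every row of $H$ has at most $\Delta$ nonzero entries and $\frac1m|Hx|\ge\frac sn d(x,\mathcal{C})$ for all $x\in\mathbb{F}_q^n$ ($|\cdot|$ Hamming weight, $d(x,\mathcal{C})$ Hamming distance to the code). A matrix is $\Delta$-limited if every row and column has at most $\Delta$ nonzero entries. $\mathcal{C}\oplus\mathbf{0}_t=\{(c,0):c\in\mathcal{C}\}$. *)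

theory Defs
  imports Complex_Main "HOL-Library.Z2"
begin

text \<open>Vectors of F_2^n are modelled as functions nat => bit vanishing outside {0..<n};
  an m x n matrix is a function nat => nat => bit (only entries i<m, j<n matter).\<close>

definition vecs :: "nat \<Rightarrow> (nat \<Rightarrow> bit) set" where
  "vecs n = {x. \<forall>i\<ge>n. x i = 0}"

definition mat_vec :: "(nat \<Rightarrow> nat \<Rightarrow> bit) \<Rightarrow> nat \<Rightarrow> nat \<Rightarrow> (nat \<Rightarrow> bit) \<Rightarrow> (nat \<Rightarrow> bit)" where
  "mat_vec H m n x = (\<lambda>i. if i < m then (\<Sum>j<n. H i j * x j) else 0)"

definition hweight :: "nat \<Rightarrow> (nat \<Rightarrow> bit) \<Rightarrow> nat" where
  "hweight n x = card {i. i < n \<and> x i \<noteq> 0}"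

definition hdist :: "nat \<Rightarrow> (nat \<Rightarrow> bit) \<Rightarrow> (nat \<Rightarrow> bit) \<Rightarrow> nat" where
  "hdist n x y = card {i. i < n \<and> x i \<noteq> y i}"

definition dist_code :: "nat \<Rightarrow> (nat \<Rightarrow> bit) \<Rightarrow> (nat \<Rightarrow> bit) set \<Rightarrow> nat" where
  "dist_code n x C = Min (hdist n x ` C)"

definition kernel :: "(nat \<Rightarrow> nat \<Rightarrow> bit) \<Rightarrow> nat \<Rightarrow> nat \<Rightarrow> (nat \<Rightarrow> bit) set" where
  "kernel H m n = {x \<in> vecs n. mat_vec H m n x = (\<lambda>_. 0)}"

definition row_weight :: "(nat \<Rightarrow> nat \<Rightarrow> bit) \<Rightarrow> nat \<Rightarrow> nat \<Rightarrow> nat" where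
  "row_weight H n i = card {j. j < n \<and> H i j \<noteq> 0}"

definition col_weight :: "(nat \<Rightarrow> nat \<Rightarrow> bit) \<Rightarrow> nat \<Rightarrow> nat \<Rightarrow> nat" where
  "col_weight H m j = card {i. i < m \<and> H i j \<noteq> 0}"

definition limited :: "(nat \<Rightarrow> nat \<Rightarrow> bit) \<Rightarrow> nat \<Rightarrow> nat \<Rightarrow> nat \<Rightarrow> bool" where
  "limited H m n \<Delta> \<longleftrightarrow> (\<forall>i<m. row_weight H n i \<le> \<Delta>) \<and> (\<forall>j<n. col_weight H m j \<le> \<Delta>)"

definition locally_testable ::
  "(nat \<Rightarrow> bit) set \<Rightarrow> (nat \<Rightarrow> nat \<Rightarrow> bit) \<Rightarrow> nat \<Rightarrow> nat \<Rightarrow> nat \<Rightarrow> real \<Rightarrow> bool" where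
  "locally_testable C H m n \<Delta> s \<longleftrightarrow>
     kernel H m n = C \<and> (\<forall>i<m. row_weight H n i \<le> \<Delta>) \<and>
     (\<forall>x \<in> vecs n. real (hweight m (mat_vec H m n x)) / real m \<ge> s / real n * real (dist_code n x C))"

definition zero_ext :: "(nat \<Rightarrow> bit) set \<Rightarrow> nat \<Rightarrow> nat \<Rightarrow> (nat \<Rightarrow> bit) set" where
  "zero_ext C n t = {x \<in> vecs (n + t). (\<lambda>i. if i < n then x i else 0) \<in> C \<and> (\<forall>i. n \<le> i \<and> i < n + t \<longrightarrow> x i = 0)}"

end

theory Submission
  imports Defs
begin

definition ext_mat :: "(nat \<Rightarrow> nat \<Rightarrow> bit) \<Rightarrow> nat \<Rightarrow> nat \<Rightarrow> nat \<Rightarrow> nat \<Rightarrow> bit" where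
  "ext_mat H m n i j = (if i < m then (if j < n then H i j else 0) else (if j = n + (i - m) then 1 else 0))"

definition restr :: "nat \<Rightarrow> (nat \<Rightarrow> bit) \<Rightarrow> nat \<Rightarrow> bit" where
  "restr n x = (\<lambda>i. if i < n then x i else 0)"

lemma restr_vecs: "restr n x \<in> vecs n"
  by (simp add: restr_def vecs_def)

lemma mv_top:
  assumes "i < m"
  shows "mat_vec (ext_mat H m n) (m + t) (n + t) x i = mat_vec H m n (restr n x) i"
proof -
  have "(\<Sum>j<n + t. ext_mat H m n i j * x j) = (\<Sum>j<n. ext_mat H m n i j * x j)"
    by (rule sum.mono_neutral_right) (auto simp: ext_mat_def assms)
  also have "\<dots> = (\<Sum>j<n. H i j * restr n x j)"
    by (rule sum.cong) (auto simp: ext_mat_def restr_def assms)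
  finally show ?thesis using assms by (simp add: mat_vec_def)
qed

lemma mv_bot:
  assumes "m \<le> i" "i < m + t"
  shows "mat_vec (ext_mat H m n) (m + t) (n + t) x i = x (n + (i - m))"
proof -
  have nm: "\<not> i < m" using assms by simp
  have mem: "n + (i - m) \<in> {..<n + t}" using assms by auto
  have "(\<Sum>j<n + t. ext_mat H m n i j * x j) = (\<Sum>j<n + t. if j = n + (i - m) then x j else 0)"
    by (rule sum.cong) (simp_all add: ext_mat_def nm)
  also have "\<dots> = x (n + (i - m))"
    using sum.delta[of "{..<n + t}" "n + (i - m)" x] mem by simp
  finally show ?thesis using assms by (simp add: mat_vec_def)
qed

definition tailw :: "nat \<Rightarrow> nat \<Rightarrow> (nat \<Rightarrow> bit) \<Rightarrow> nat" where
  "tailw n t x = card {j. n \<le> j \<and> j < n + t \<and> x j \<noteq> 0}"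

lemma hweight_ext:
  "hweight (m + t) (mat_vec (ext_mat H m n) (m + t) (n + t) x)
     = hweight m (mat_vec H m n (restr n x)) + tailw n t x"
proof -
  let ?y = "mat_vec (ext_mat H m n) (m + t) (n + t) x"
  let ?A = "{i. i < m \<and> mat_vec H m n (restr n x) i \<noteq> 0}"
  let ?B = "{j. n \<le> j \<and> j < n + t \<and> x j \<noteq> 0}"
  have eq: "{i. i < m + t \<and> ?y i \<noteq> 0} = ?A \<union> (\<lambda>j. m + (j - n)) ` ?B"
  proof (rule set_eqI, rule iffI)
    fix i assume "i \<in> {i. i < m + t \<and> ?y i \<noteq> 0}"
    then have i: "i < m + t" "?y i \<noteq> 0" by auto
    show "i \<in> ?A \<union> (\<lambda>j. m + (j - n)) ` ?B"
    proof (cases "i < m")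
      case True then show ?thesis using i mv_top[of i m H n t x] by auto
    next
      case False
      then have "?y i = x (n + (i - m))" using i mv_bot[of m i t H n x] by auto
      then have "n + (i - m) \<in> ?B" using i False by auto
      moreover have "i = m + ((n + (i - m)) - n)" using False by auto
      ultimately show ?thesis by blast
    qed
  next
    fix i assume "i \<in> ?A \<union> (\<lambda>j. m + (j - n)) ` ?B"
    then show "i \<in> {i. i < m + t \<and> ?y i \<noteq> 0}"
    proof
      assume "i \<in> ?A" then show ?thesis using mv_top[of i m H n t x] by auto
    next
      assume "i \<in> (\<lambda>j. m + (j - n)) ` ?B"
      then obtain j where j: "n \<le> j" "j < n + t" "x j \<noteq> 0" "i = m + (j - n)" by auto
      then have "?y i = x j" using mv_bot[of m i t H n x] by auto
      then show ?thesis using j by auto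
    qed
  qed
  have inj: "inj_on (\<lambda>j. m + (j - n)) ?B" by (auto simp: inj_on_def)
  have "card (?A \<union> (\<lambda>j. m + (j - n)) ` ?B) = card ?A + card ((\<lambda>j. m + (j - n)) ` ?B)"
    by (rule card_Un_disjoint) auto
  also have "card ((\<lambda>j. m + (j - n)) ` ?B) = card ?B" using inj by (rule card_image)
  finally show ?thesis unfolding hweight_def tailw_def eq by simp
qed

lemma hdist_le: "hdist n x y \<le> n"
proof -
  have "card {i. i < n \<and> x i \<noteq> y i} \<le> card {..<n}" by (rule card_mono) auto
  then show ?thesis by (simp add: hdist_def)
qed

lemma restr_id: "c \<in> vecs n \<Longrightarrow> restr n c = c"
  by (rule ext) (simp add: restr_def vecs_def)

lemma hdist_ext:
  assumes "c \<in> vecs n"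
  shows "hdist (n + t) x c = hdist n (restr n x) c + tailw n t x"
proof -
  have eq: "{i. i < n + t \<and> x i \<noteq> c i} = {i. i < n \<and> restr n x i \<noteq> c i} \<union> {j. n \<le> j \<and> j < n + t \<and> x j \<noteq> 0}"
    using assms by (auto simp: vecs_def restr_def)
  show ?thesis unfolding hdist_def tailw_def eq
    by (rule card_Un_disjoint) auto
qed

theorem lemma13:
  fixes C :: "(nat \<Rightarrow> bit) set" and H :: "nat \<Rightarrow> nat \<Rightarrow> bit"
    and n m t \<Delta> :: nat and s :: real
  assumes "C \<subset> vecs n"
    and "locally_testable C H m n \<Delta> s"
    and "limited H m n \<Delta>"
    and "real n / 2 \<le> real m" and "m \<le> n"
  shows "\<exists>H' m'. limited H' m' (n + t) \<Delta> \<and>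
           locally_testable (zero_ext C n t) H' m' (n + t) \<Delta> (min (s / 2) 1)"
proof -
  let ?H = "ext_mat H m n"
  have ker: "kernel H m n = C" and rw: "\<forall>i<m. row_weight H n i \<le> \<Delta>"
    and test: "\<forall>x \<in> vecs n. real (hweight m (mat_vec H m n x)) / real m \<ge> s / real n * real (dist_code n x C)"
    using assms(2) unfolding locally_testable_def by auto
  have cw: "\<forall>j<n. col_weight H m j \<le> \<Delta>" using assms(3) unfolding limited_def by auto
  obtain x where x: "x \<in> vecs n" "x \<notin> C" using assms(1) by auto
  have "mat_vec H m n x \<noteq> (\<lambda>_. 0)" using x ker unfolding kernel_def by blast
  then obtain i where i: "mat_vec H m n x i \<noteq> 0" by (meson ext)
  then have im: "i < m" by (auto simp: mat_vec_def split: if_splits)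
  have "(\<Sum>j<n. H i j * x j) \<noteq> 0" using i im by (simp add: mat_vec_def)
  moreover have "(\<Sum>j<n. H i j * x j) = 0" if "\<forall>j<n. H i j = 0"
    using that by (intro sum.neutral) simp
  ultimately obtain j where j: "j < n" "H i j \<noteq> 0" by blast
  have "row_weight H n i \<ge> 1"
  proof -
    have "j \<in> {j. j < n \<and> H i j \<noteq> 0}" using j by simp
    moreover have "finite {j. j < n \<and> H i j \<noteq> 0}" by simp
    ultimately have "card {j. j < n \<and> H i j \<noteq> 0} > 0" using card_gt_0_iff by blast
    then show ?thesis unfolding row_weight_def by simp
  qed
  then have D1: "\<Delta> \<ge> 1" using rw im by fastforce
  have m1: "m \<ge> 1" using im by auto
  have n1: "n \<ge> 1" using j by auto
  have zC: "(\<lambda>_. 0) \<in> C" using ker by (auto simp: kernel_def vecs_def mat_vec_def)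
  have Cfin: "finite (hdist n y ` C)" for y :: "nat \<Rightarrow> bit"
  proof -
    have "hdist n y ` C \<subseteq> {..n}" using hdist_le by auto
    then show ?thesis using finite_subset by blast
  qed
  have lim: "limited ?H (m + t) (n + t) \<Delta>"
    unfolding limited_def
  proof safe
    fix i assume i: "i < m + t"
    show "row_weight ?H (n + t) i \<le> \<Delta>"
    proof (cases "i < m")
      case True
      have "{j. j < n + t \<and> ?H i j \<noteq> 0} = {j. j < n \<and> H i j \<noteq> 0}"
        using True by (auto simp: ext_mat_def)
      then show ?thesis using rw True by (simp add: row_weight_def)
    next
      case False
      have "{j. j < n + t \<and> ?H i j \<noteq> 0} = {n + (i - m)}"
        using False i by (auto simp: ext_mat_def)
      then show ?thesis using D1 by (simp add: row_weight_def)
    qed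
  next
    fix j assume j: "j < n + t"
    show "col_weight ?H (m + t) j \<le> \<Delta>"
    proof (cases "j < n")
      case True
      have "{i. i < m + t \<and> ?H i j \<noteq> 0} = {i. i < m \<and> H i j \<noteq> 0}"
        using True by (auto simp: ext_mat_def)
      then show ?thesis using cw True by (simp add: col_weight_def)
    next
      case False
      have "{i. i < m + t \<and> ?H i j \<noteq> 0} = {m + (j - n)}"
        using False j by (auto simp: ext_mat_def)
      then show ?thesis using D1 by (simp add: col_weight_def)
    qed
  qed
  have kerE: "kernel ?H (m + t) (n + t) = zero_ext C n t"
  proof (rule set_eqI)
    fix y
    show "y \<in> kernel ?H (m + t) (n + t) \<longleftrightarrow> y \<in> zero_ext C n t"
    proof
      assume y: "y \<in> kernel ?H (m + t) (n + t)"
      then have yv: "y \<in> vecs (n + t)" and y0: "\<And>i. mat_vec ?H (m + t) (n + t) y i = 0"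
        by (auto simp: kernel_def)
      have "mat_vec H m n (restr n y) = (\<lambda>_. 0)"
      proof
        fix i show "mat_vec H m n (restr n y) i = 0"
          using y0[of i] mv_top[of i m H n t y] by (cases "i < m") (auto simp: mat_vec_def)
      qed
      then have "restr n y \<in> C" using ker restr_vecs[of n y] by (auto simp: kernel_def)
      moreover have "y i = 0" if "n \<le> i" "i < n + t" for i
        using y0[of "m + (i - n)"] mv_bot[of m "m + (i - n)" t H n y] that by auto
      ultimately show "y \<in> zero_ext C n t" using yv by (auto simp: zero_ext_def restr_def)
    next
      assume y: "y \<in> zero_ext C n t"
      then have yv: "y \<in> vecs (n + t)" and yC: "restr n y \<in> C"
        and yt: "\<And>i. n \<le> i \<Longrightarrow> i < n + t \<Longrightarrow> y i = 0"
        by (auto simp: zero_ext_def restr_def)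
      have "mat_vec H m n (restr n y) = (\<lambda>_. 0)" using yC ker by (auto simp: kernel_def)
      have "mat_vec ?H (m + t) (n + t) y i = 0" for i
      proof (cases "i < m")
        case True then show ?thesis using mv_top[of i m H n t y] \<open>mat_vec H m n (restr n y) = (\<lambda>_. 0)\<close> by simp
      next
        case False
        show ?thesis
        proof (cases "i < m + t")
          case True then show ?thesis using False mv_bot[of m i t H n y] yt by auto
        next
          case False then show ?thesis by (simp add: mat_vec_def)
        qed
      qed
      then show "y \<in> kernel ?H (m + t) (n + t)" using yv by (auto simp: kernel_def)
    qed
  qed
  have rwE: "\<forall>i<m + t. row_weight ?H (n + t) i \<le> \<Delta>" using lim by (simp add: limited_def)
  have testE: "real (hweight (m + t) (mat_vec ?H (m + t) (n + t) y)) / real (m + t)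
      \<ge> min (s / 2) 1 / real (n + t) * real (dist_code (n + t) y (zero_ext C n t))"
    if y: "y \<in> vecs (n + t)" for y
  proof -
    let ?s = "min (s / 2) 1"
    define a where "a = real (hweight m (mat_vec H m n (restr n y)))"
    define w where "w = real (tailw n t y)"
    define d where "d = real (dist_code n (restr n y) C)"
    define D where "D = real (dist_code (n + t) y (zero_ext C n t))"
    have LHS: "real (hweight (m + t) (mat_vec ?H (m + t) (n + t) y)) = a + w"
      by (simp add: hweight_ext a_def w_def)
    have ta: "a / real m \<ge> s / real n * d" using test restr_vecs[of n y] by (simp add: a_def d_def)
    have "D \<le> d + w"
    proof -
      have "dist_code n (restr n y) C \<in> hdist n (restr n y) ` C"
        unfolding dist_code_def using Cfin zC by (intro Min_in) auto
      then obtain c where c: "c \<in> C" "dist_code n (restr n y) C = hdist n (restr n y) c" by auto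
      have cv: "c \<in> vecs n" using c assms(1) by auto
      have cv2: "c \<in> vecs (n + t)" using cv by (simp add: vecs_def)
      have cz: "c \<in> zero_ext C n t" using c cv cv2 restr_id[OF cv]
        unfolding zero_ext_def restr_def by (simp add: vecs_def)
      have Efin: "finite (hdist (n + t) y ` zero_ext C n t)"
      proof -
        have "hdist (n+t) y ` zero_ext C n t \<subseteq> {..n+t}" using hdist_le by auto
        then show ?thesis using finite_subset by blast
      qed
      have "dist_code (n + t) y (zero_ext C n t) \<le> hdist (n + t) y c"
        unfolding dist_code_def using Efin cz by (intro Min_le) auto
      also have "\<dots> = hdist n (restr n y) c + tailw n t y" using hdist_ext[OF cv] .
      finally show ?thesis using c by (simp add: D_def d_def w_def)
    qed
    have a0: "a \<ge> 0" "w \<ge> 0" "d \<ge> 0" "D \<ge> 0" by (auto simp: a_def w_def d_def D_def)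
    show ?thesis
    proof (cases "?s \<le> 0")
      case True
      have "?s / real (n + t) * D \<le> 0" using True a0 by (simp add: divide_nonpos_nonneg mult_nonpos_nonneg)
      moreover have "(a + w) / real (m + t) \<ge> 0" using a0 by simp
      ultimately show ?thesis unfolding LHS D_def by linarith
    next
      case False
      then have sp: "s > 0" "?s > 0" "?s \<le> s / 2" "?s \<le> 1" by auto
      have mpos: "real m > 0" "real n > 0" using m1 n1 by auto
      have aa: "a \<ge> s * real m / real n * d" using ta mpos by (simp add: field_simps)
      have k1: "s * real m / real n * (real n + real t) \<ge> ?s * (real m + real t)"
      proof -
        have "2 * real m * (real n + real t) \<ge> real n * (real m + real t)"
        proof -
          have "2 * real m \<ge> real n" using assms(4) by simp
          then have "2 * real m * real t \<ge> real n * real t" by (intro mult_right_mono) auto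
          moreover have h: "real m * real n \<ge> 0" by simp
          ultimately show ?thesis by (simp add: algebra_simps) (use h in linarith)
        qed
        then have "s * (2 * real m * (real n + real t)) \<ge> s * (real n * (real m + real t))"
          using sp by (intro mult_left_mono) auto
        then have "s * real m / real n * (real n + real t) \<ge> s / 2 * (real m + real t)"
          using mpos by (simp add: field_simps)
        moreover have "s / 2 * (real m + real t) \<ge> ?s * (real m + real t)"
          using sp by (intro mult_right_mono) auto
        ultimately show ?thesis by linarith
      qed
      have k2: "real n + real t \<ge> ?s * (real m + real t)"
      proof -
        have "?s * (real m + real t) \<le> 1 * (real m + real t)" using sp by (intro mult_right_mono) auto
        then show ?thesis using assms(5) by simp
      qed
      have "(a + w) * (real n + real t) \<ge> ?s * (real m + real t) * (d + w)"
      proof -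
        have "?s * (real m + real t) * d \<le> (s * real m / real n * (real n + real t)) * d"
          using k1 a0 by (intro mult_right_mono) auto
        also have "\<dots> = s * real m / real n * d * (real n + real t)" by simp
        also have "\<dots> \<le> a * (real n + real t)"
          using aa by (intro mult_right_mono) auto
        finally have A: "?s * (real m + real t) * d \<le> a * (real n + real t)" .
        have B: "w * (real n + real t) \<ge> ?s * (real m + real t) * w"
          using k2 a0 by (simp add: mult.commute mult_left_mono)
        show ?thesis using A B by (simp add: algebra_simps)
      qed
      moreover have "?s * (real m + real t) * (d + w) \<ge> ?s * (real m + real t) * D"
        using \<open>D \<le> d + w\<close> sp by (intro mult_left_mono) auto
      ultimately have "(a + w) * (real n + real t) \<ge> ?s * (real m + real t) * D" by linarith
      then have "(a + w) / (real m + real t) \<ge> ?s / (real n + real t) * D"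
        using mpos by (simp add: field_simps)
      then show ?thesis unfolding LHS D_def by simp
    qed
  qed
  show ?thesis
    by (rule exI[of _ ?H], rule exI[of _ "m + t"])
       (use lim kerE rwE testE in \<open>auto simp: locally_testable_def\<close>)
qed

end
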